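(* Let $\mu \in C^1(\mathbb{R})$ and a periodic $\phi\in C^2(\mathbb{R})$ satisfy $\phi''(x) = 1 - \int_{\mathbb{R}} \mu(\tfrac12 v^2 + \phi(x))\,dv$ together with assumptions (i)–(iv) below. Then $q(x) = \int_{\mathbb{R}} \mu'(\tfrac12 v^2 + \phi(x))\,dv > 0$ for some $x \in [0,P_\phi]$ (indeed for some $x\in[0,P_\phi/2]$). In particular, it is impossible that $\mu'(e) \le 0$ for all $e \in [\phi_-,\infty)$.
   Context: Assumptions: (i) $\mu\in C^1(\mathbb{R})$ is nonnegative; (ii) $\int_{\mathbb{R}} \mu(\tfrac12 v^2)\,dv = 1$; (iii) there are $\gamma>1$, $C>0$ with $|\mu'(y)| \le C/(1+|y|^\gamma)$ for all $y$; (iv) $\phi$ is nonconstant with minimal period $P_\phi$, and, writing $\phi_+ = \max\phi$, $\phi_- = \min\phi$, it is normalized so that $\phi(0)=\phi(P_\phi)=\phi_+$, $\phi(P_\phi/2) = \phi_-$, $\phi(x) = \phi(P_\phi - x)$ for all $x\in[0,P_\phi]$, and $\phi$ is strictly decreasing on $[0,P_\phi/2]$. *)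

theory Defs
  imports "HOL-Analysis.Analysis"
begin

end

theory Submission imports Defs "HOL-Probability.Sinc_Integral" begin

lemma integrable_dom: "integrable lborel (\<lambda>v::real. M / (1 + v\<^sup>2))"
proof -
  have "set_integrable lborel (einterval (-\<infinity>) \<infinity>) (\<lambda>x::real. inverse (1 + x^2))"
    by (rule integrable_inverse_1_plus_square)
  then have "integrable lborel (\<lambda>x::real. inverse (1 + x^2))"
    by (simp add: set_integrable_def einterval_eq_UNIV)
  then have "integrable lborel (\<lambda>x::real. M * inverse (1 + x^2))"
    by (rule integrable_mult_right)
  then show ?thesis by (simp add: divide_inverse)
qed

lemma decay_bound:
  fixes \<mu>' :: "real \<Rightarrow> real"
  assumes g: "\<gamma> > 1" "C > 0" and dec: "\<forall>y. \<bar>\<mu>' y\<bar> \<le> C / (1 + \<bar>y\<bar> powr \<gamma>)"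
    and K: "\<bar>s\<bar> \<le> K"
  shows "\<bar>\<mu>' (v\<^sup>2/2 + s)\<bar> \<le> C * (4*K+5) / (1 + v\<^sup>2)"
proof -
  define y where "y = v\<^sup>2/2 + s"
  have K0: "K \<ge> 0" using K by linarith
  have b: "\<bar>\<mu>' y\<bar> \<le> C / (1 + \<bar>y\<bar> powr \<gamma>)" using dec by blast
  show ?thesis
  proof (cases "v\<^sup>2 \<ge> 4*K+4")
    case True
    have y1: "y \<ge> 1" "y \<ge> v\<^sup>2/4" using True K unfolding y_def by (auto simp: abs_le_iff)
    have "\<bar>y\<bar> powr \<gamma> \<ge> \<bar>y\<bar> powr 1"
      using y1 g by (intro powr_mono) auto
    then have "\<bar>y\<bar> powr \<gamma> \<ge> v\<^sup>2/4" using y1 by simp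
    then have "C / (1 + \<bar>y\<bar> powr \<gamma>) \<le> C / (1 + v\<^sup>2/4)"
      using g by (intro divide_left_mono) (auto intro!: mult_pos_pos add_pos_nonneg)
    also have "\<dots> = 4*C / (4 + v\<^sup>2)" by (simp add: field_simps)
    also have "\<dots> \<le> 4*C / (1 + v\<^sup>2)"
      using g by (intro divide_left_mono) (auto intro!: mult_pos_pos add_pos_nonneg)
    also have "\<dots> \<le> C*(4*K+5) / (1 + v\<^sup>2)"
      using g K0 by (intro divide_right_mono) (auto intro: add_pos_nonneg)
    finally show ?thesis using b unfolding y_def by linarith
  next
    case False
    have "C / (1 + \<bar>y\<bar> powr \<gamma>) \<le> C" using g
      by (simp add: divide_le_eq) (smt (verit) mult_le_cancel_left1 powr_ge_zero)
    also have "C \<le> C*(4*K+5) / (1 + v\<^sup>2)"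
      using False g by (simp add: le_divide_eq add_pos_nonneg)
    finally show ?thesis using b unfolding y_def by linarith
  qed
qed

lemma fubini_mono:
  fixes \<mu> \<mu>' :: "real \<Rightarrow> real"
  assumes mu_deriv: "\<And>y. (\<mu> has_real_derivative \<mu>' y) (at y)"
    and mu'_cont: "continuous_on UNIV \<mu>'"
    and g: "\<gamma> > 1" "C > 0" and dec: "\<forall>y. \<bar>\<mu>' y\<bar> \<le> C / (1 + \<bar>y\<bar> powr \<gamma>)"
    and ab: "a \<le> b"
    and ia: "integrable lborel (\<lambda>v. \<mu> (v\<^sup>2 / 2 + a))"
    and ib: "integrable lborel (\<lambda>v. \<mu> (v\<^sup>2 / 2 + b))"
    and q: "\<And>s. s \<in> {a..b} \<Longrightarrow> (LINT v|lborel. \<mu>' (v\<^sup>2 / 2 + s)) \<le> 0"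
  shows "(LINT v|lborel. \<mu> (v\<^sup>2 / 2 + b)) \<le> (LINT v|lborel. \<mu> (v\<^sup>2 / 2 + a))"
proof -
  define K where "K = \<bar>a\<bar> + \<bar>b\<bar>"
  define M where "M = C * (4*K+5)"
  define f where "f = (\<lambda>(v::real) (s::real). \<mu>' (v\<^sup>2 / 2 + s) * indicator {a..b} s)"
  have mu'm[measurable]: "\<mu>' \<in> borel_measurable borel"
    by (rule borel_measurable_continuous_onI[OF mu'_cont])
  have cont: "isCont \<mu>' x" for x using mu'_cont by (simp add: continuous_on_eq_continuous_at)
  have bnd: "\<bar>\<mu>' (v\<^sup>2/2 + s)\<bar> \<le> M / (1 + v\<^sup>2)" if "s \<in> {a..b}" for v s
    unfolding M_def by (rule decay_bound[OF g dec]) (use that in \<open>auto simp: K_def\<close>)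
  have fm: "case_prod f \<in> borel_measurable (lborel \<Otimes>\<^sub>M lborel)"
    unfolding f_def by measurable
  have inner_int: "integrable lborel (f v)" for v
  proof -
    have "integrable lborel (\<lambda>s. \<mu>' (v\<^sup>2 / 2 + s) * indicator {a..b} s)"
      by (rule borel_integrable_atLeastAtMost) (intro continuous_intros cont[THEN isCont_o2[rotated]])
    then show ?thesis by (simp add: f_def)
  qed
  define c where "c = (LINT s|lborel. indicator {a..b} s :: real)"
  have int_f: "integrable (lborel \<Otimes>\<^sub>M lborel) (case_prod f)"
  proof (rule lborel_pair.Fubini_integrable[OF fm])
    show "AE x in lborel. integrable lborel (\<lambda>y. case_prod f (x, y))"
      using inner_int by simp
    show "integrable lborel (\<lambda>x. LINT y|lborel. norm (case_prod f (x, y)))"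
    proof (rule Bochner_Integration.integrable_bound)
      show "integrable lborel (\<lambda>v. (M / (1 + v\<^sup>2)) * c)"
        by (intro integrable_mult_left integrable_dom)
      show "(\<lambda>x. LINT y|lborel. norm (case_prod f (x, y))) \<in> borel_measurable lborel"
        using fm by measurable
      show "AE x in lborel. norm (LINT y|lborel. norm (case_prod f (x, y))) \<le> norm (M / (1 + x\<^sup>2) * c)"
      proof (intro AE_I2)
        fix v
        have "(LINT y|lborel. norm (f v y)) \<le> (LINT y|lborel. (M / (1 + v\<^sup>2)) * indicator {a..b} y)"
        proof (rule integral_mono)
          show "integrable lborel (\<lambda>y. norm (f v y))" using inner_int by (rule integrable_norm)
          show "integrable lborel (\<lambda>y. (M / (1 + v\<^sup>2)) * indicator {a..b} y)"
            by (intro integrable_mult_right integrable_real_indicator) (use ab in \<open>auto simp: emeasure_lborel_Icc\<close>)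
          show "norm (f v y) \<le> M / (1 + v\<^sup>2) * indicator {a..b} y" for y
            using bnd[of y v] by (auto simp: f_def indicator_def)
        qed
        also have "\<dots> = M / (1 + v\<^sup>2) * c" unfolding c_def by simp
        finally have "(LINT y|lborel. norm (f v y)) \<le> M / (1 + v\<^sup>2) * c" .
        moreover have "0 \<le> (LINT y|lborel. norm (f v y))" by (rule Bochner_Integration.integral_nonneg) auto
        ultimately show "norm (LINT y|lborel. norm (case_prod f (v, y))) \<le> norm (M / (1 + v\<^sup>2) * c)"
          by simp (erule order_trans, intro divide_right_mono, auto)
      qed
    qed
  qed
  have fub: "(LINT s|lborel. (LINT v|lborel. f v s)) = (LINT v|lborel. (LINT s|lborel. f v s))"
    by (rule lborel_pair.Fubini_integral[OF int_f])
  have "0 \<le> (LINT s|lborel. - (LINT v|lborel. f v s))"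
  proof (rule Bochner_Integration.integral_nonneg)
    fix s
    have "(LINT v|lborel. f v s) = (LINT v|lborel. \<mu>' (v\<^sup>2 / 2 + s)) * indicator {a..b} s"
      by (simp add: f_def)
    then show "0 \<le> - (LINT v|lborel. f v s)"
      using q[of s] by (auto simp: indicator_def)
  qed
  then have lhs: "(LINT s|lborel. (LINT v|lborel. f v s)) \<le> 0" by simp
  have rhs: "(LINT s|lborel. f v s) = \<mu> (v\<^sup>2 / 2 + b) - \<mu> (v\<^sup>2 / 2 + a)" for v
  proof -
    have "(LINT s|lborel. indicator {a..b} s *\<^sub>R \<mu>' (v\<^sup>2 / 2 + s)) = \<mu> (v\<^sup>2 / 2 + b) - \<mu> (v\<^sup>2 / 2 + a)"
    proof (rule integral_FTC_atLeastAtMost[OF ab])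
      show "((\<lambda>s. \<mu> (v\<^sup>2 / 2 + s)) has_vector_derivative \<mu>' (v\<^sup>2 / 2 + s)) (at s within {a..b})" for s
      proof -
        have "((\<lambda>s. v\<^sup>2 / 2 + s) has_real_derivative 1) (at s)"
          by (rule derivative_eq_intros refl)+ simp
        from DERIV_chain2[OF mu_deriv this]
        have "((\<lambda>s. \<mu> (v\<^sup>2 / 2 + s)) has_real_derivative \<mu>' (v\<^sup>2 / 2 + s)) (at s within {a..b})"
          by (simp add: has_field_derivative_at_within)
        then show ?thesis by (simp add: has_real_derivative_iff_has_vector_derivative)
      qed
      show "continuous_on {a..b} (\<lambda>s. \<mu>' (v\<^sup>2 / 2 + s))"
        by (intro continuous_at_imp_continuous_on ballI continuous_intros cont[THEN isCont_o2[rotated]])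
    qed
    then show ?thesis by (simp add: f_def mult.commute)
  qed
  have "(LINT v|lborel. \<mu> (v\<^sup>2 / 2 + b) - \<mu> (v\<^sup>2 / 2 + a)) \<le> 0"
    using fub lhs rhs by simp
  then show ?thesis using ia ib by (simp add: integral_diff)
qed

lemma second_deriv_max:
  fixes f f' f'' :: "real \<Rightarrow> real"
  assumes d1: "\<And>x. (f has_real_derivative f' x) (at x)"
    and d2: "(f' has_real_derivative f'' x0) (at x0)"
    and mx: "\<And>x. f x \<le> f x0"
  shows "f'' x0 \<le> 0"
proof (rule ccontr)
  assume "\<not> f'' x0 \<le> 0"
  then have pos: "f'' x0 > 0" by simp
  have z: "f' x0 = 0"
    by (rule DERIV_local_max[OF d1, of 1]) (use mx in auto)
  obtain d where d: "d > 0" "\<And>h. h > 0 \<Longrightarrow> h < d \<Longrightarrow> f' x0 < f' (x0 + h)"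
    using DERIV_pos_inc_right[OF d2 pos] by blast
  obtain z' where z': "x0 < z'" "z' < x0 + d/2" "f (x0 + d/2) - f x0 = (x0 + d/2 - x0) * f' z'"
    using MVT2[of x0 "x0 + d/2" f f'] d1 d(1) by auto
  have "f' z' > 0" using d(2)[of "z' - x0"] z z' by auto
  then have "(x0 + d/2 - x0) * f' z' > 0" using d(1) by simp
  then have "f (x0 + d/2) - f x0 > 0" using z'(3) by linarith
  with mx[of "x0 + d/2"] show False by simp
qed

lemma second_deriv_min:
  fixes f f' f'' :: "real \<Rightarrow> real"
  assumes d1: "\<And>x. (f has_real_derivative f' x) (at x)"
    and d2: "(f' has_real_derivative f'' x0) (at x0)"
    and mn: "\<And>x. f x0 \<le> f x"
  shows "f'' x0 \<ge> 0"
proof -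
  have "- f'' x0 \<le> 0"
    by (rule second_deriv_max[of "\<lambda>x. - f x" "\<lambda>x. - f' x"])
      (use d1 d2 mn in \<open>auto intro: DERIV_minus\<close>)
  then show ?thesis by simp
qed

theorem theorem3:
  fixes \<mu> \<mu>' \<phi> \<phi>' \<phi>'' :: "real \<Rightarrow> real" and P :: real
  assumes mu_deriv: "\<And>y. (\<mu> has_real_derivative \<mu>' y) (at y)"
    and mu'_cont: "continuous_on UNIV \<mu>'"
    and mu_nonneg: "\<And>y. \<mu> y \<ge> 0"
    and mu_norm: "(LINT v|lborel. \<mu> (v\<^sup>2 / 2)) = 1"
    and mu'_decay: "\<exists>\<gamma> C. \<gamma> > 1 \<and> C > 0 \<and> (\<forall>y. \<bar>\<mu>' y\<bar> \<le> C / (1 + \<bar>y\<bar> powr \<gamma>))"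
    and phi_deriv: "\<And>x. (\<phi> has_real_derivative \<phi>' x) (at x)"
    and phi'_deriv: "\<And>x. (\<phi>' has_real_derivative \<phi>'' x) (at x)"
    and phi''_cont: "continuous_on UNIV \<phi>''"
    and rho_integrable: "\<And>x. integrable lborel (\<lambda>v. \<mu> (v\<^sup>2 / 2 + \<phi> x))"
    and poisson: "\<And>x. \<phi>'' x = 1 - (LINT v|lborel. \<mu> (v\<^sup>2 / 2 + \<phi> x))"
    and P_pos: "P > 0"
    and periodic: "\<And>x. \<phi> (x + P) = \<phi> x"
    and minimal_period: "\<And>p. 0 < p \<Longrightarrow> p < P \<Longrightarrow> \<not> (\<forall>x. \<phi> (x + p) = \<phi> x)"
    and nonconst: "\<exists>x y. \<phi> x \<noteq> \<phi> y"
    and phi_max: "\<And>x. \<phi> x \<le> \<phi> 0"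
    and phi_min: "\<And>x. \<phi> (P / 2) \<le> \<phi> x"
    and phi_P: "\<phi> P = \<phi> 0"
    and phi_sym: "\<And>x. x \<in> {0..P} \<Longrightarrow> \<phi> x = \<phi> (P - x)"
    and phi_decr: "strict_antimono_on {0..P/2} \<phi>"
  shows "(\<exists>x\<in>{0..P/2}. (LINT v|lborel. \<mu>' (v\<^sup>2 / 2 + \<phi> x)) > 0)
         \<and> \<not> (\<forall>e\<ge>\<phi> (P / 2). \<mu>' e \<le> 0)"
proof -
  define R where "R = (\<lambda>\<psi>. LINT v|lborel. \<mu> (v\<^sup>2 / 2 + \<psi>))"
  define lo where "lo = \<phi> (P/2)"
  define hi where "hi = \<phi> 0"
  have phic: "continuous_on UNIV \<phi>"
    using phi_deriv by (meson DERIV_continuous continuous_at_imp_continuous_on)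
  have rng: "\<exists>x\<in>{0..P/2}. \<phi> x = \<psi>" if th: "lo \<le> \<psi>" "\<psi> \<le> hi" for \<psi>
  proof -
    have "continuous_on {0..P/2} \<phi>" using phic by (rule continuous_on_subset) simp
    then obtain x where "0 \<le> x" "x \<le> P/2" "\<phi> x = \<psi>"
      using IVT2'[of \<phi> "P/2" \<psi> 0] th P_pos unfolding lo_def hi_def by auto
    then show ?thesis by auto
  qed
  have rint: "integrable lborel (\<lambda>v. \<mu> (v\<^sup>2 / 2 + \<psi>))" if "lo \<le> \<psi>" "\<psi> \<le> hi" for \<psi>
    using rng[OF that] rho_integrable by auto
  have core: False if mono: "\<And>a b. lo \<le> a \<Longrightarrow> a \<le> b \<Longrightarrow> b \<le> hi \<Longrightarrow> R b \<le> R a"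
  proof -
    have "\<phi>'' 0 \<le> 0" by (rule second_deriv_max[of \<phi> \<phi>' \<phi>'' 0, OF phi_deriv phi'_deriv[of 0] phi_max])
    then have Rhi: "R hi \<ge> 1" using poisson[of 0] unfolding R_def hi_def by simp
    have "\<phi>'' (P/2) \<ge> 0" by (rule second_deriv_min[of \<phi> \<phi>' \<phi>'' "P/2", OF phi_deriv phi'_deriv[of "P/2"] phi_min])
    then have Rlo: "R lo \<le> 1" using poisson[of "P/2"] unfolding R_def lo_def by simp
    have lohi: "lo \<le> hi" using phi_max unfolding lo_def hi_def by simp
    have z: "\<phi>'' x = 0" for x
    proof -
      have b: "lo \<le> \<phi> x" "\<phi> x \<le> hi" using phi_max phi_min unfolding lo_def hi_def by auto
      have "R (\<phi> x) \<le> R lo" using mono[of lo "\<phi> x"] b by simp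
      moreover have "R hi \<le> R (\<phi> x)" using mono[of "\<phi> x" hi] b by simp
      ultimately have "R (\<phi> x) = 1" using Rhi Rlo by simp
      then show ?thesis using poisson[of x] unfolding R_def by simp
    qed
    have c: "\<phi>' x = \<phi>' 0" for x
      by (rule DERIV_isconst_all) (use phi'_deriv z in metis)
    define g where "g = (\<lambda>x. \<phi> x - \<phi>' 0 * x)"
    have gd: "\<forall>y. (g has_real_derivative 0) (at y)"
    proof
      fix y
      show "(g has_real_derivative 0) (at y)"
        using DERIV_diff[OF phi_deriv[of y] DERIV_cmult[OF DERIV_ident, of "\<phi>' 0"]] c[of y]
        unfolding g_def by simp
    qed
    have lin: "\<phi> x = \<phi> 0 + \<phi>' 0 * x" for x
    proof -
      have "g x = g 0" by (rule DERIV_isconst_all[OF gd])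
      then have "\<phi> x - \<phi>' 0 * x = \<phi> 0" unfolding g_def by simp
      then show ?thesis by linarith
    qed
    have "\<phi>' 0 * P = 0" using lin[of P] phi_P by linarith
    then have "\<phi>' 0 = 0" using P_pos by simp
    then have "\<phi> x = \<phi> 0" for x using lin by simp
    then show False using nonconst by metis
  qed
  obtain \<gamma> C where gC: "\<gamma> > 1" "C > 0" "\<forall>y. \<bar>\<mu>' y\<bar> \<le> C / (1 + \<bar>y\<bar> powr \<gamma>)"
    using mu'_decay by blast
  have part1: "\<exists>x\<in>{0..P/2}. (LINT v|lborel. \<mu>' (v\<^sup>2 / 2 + \<phi> x)) > 0"
  proof (rule ccontr)
    assume "\<not> ?thesis"
    then have nq: "\<And>x. x \<in> {0..P/2} \<Longrightarrow> (LINT v|lborel. \<mu>' (v\<^sup>2 / 2 + \<phi> x)) \<le> 0"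
      by (meson not_less)
    show False
    proof (rule core)
      fix a b assume ab: "lo \<le> a" "a \<le> b" "b \<le> hi"
      show "R b \<le> R a" unfolding R_def
      proof (rule fubini_mono[OF mu_deriv mu'_cont gC ab(2)])
        show "integrable lborel (\<lambda>v. \<mu> (v\<^sup>2 / 2 + a))" using ab by (intro rint) auto
        show "integrable lborel (\<lambda>v. \<mu> (v\<^sup>2 / 2 + b))" using ab by (intro rint) auto
        fix s assume "s \<in> {a..b}"
        then obtain x where "x \<in> {0..P/2}" "\<phi> x = s" using rng[of s] ab by auto
        then show "(LINT v|lborel. \<mu>' (v\<^sup>2 / 2 + s)) \<le> 0" using nq by auto
      qed
    qed
  qed
  have part2: "\<not> (\<forall>e\<ge>\<phi> (P / 2). \<mu>' e \<le> 0)"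
  proof
    assume neg: "\<forall>e\<ge>\<phi> (P / 2). \<mu>' e \<le> 0"
    have mdec: "\<mu> y \<le> \<mu> x" if "lo \<le> x" "x \<le> y" for x y
      by (rule DERIV_nonpos_imp_nonincreasing[OF that(2)])
        (use mu_deriv neg that in \<open>force simp: lo_def\<close>)
    show False
    proof (rule core)
      fix a b assume ab: "lo \<le> a" "a \<le> b" "b \<le> hi"
      show "R b \<le> R a" unfolding R_def
      proof (rule integral_mono)
        show "integrable lborel (\<lambda>v. \<mu> (v\<^sup>2 / 2 + a))" using ab by (intro rint) auto
        show "integrable lborel (\<lambda>v. \<mu> (v\<^sup>2 / 2 + b))" using ab by (intro rint) auto
        fix v :: real
        have v0: "v\<^sup>2 / 2 \<ge> 0" by simp
        have "lo \<le> v\<^sup>2 / 2 + a" "v\<^sup>2 / 2 + a \<le> v\<^sup>2 / 2 + b" using v0 ab by linarith+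
        then show "\<mu> (v\<^sup>2 / 2 + b) \<le> \<mu> (v\<^sup>2 / 2 + a)" by (rule mdec)
      qed
    qed
  qed
  show ?thesis using part1 part2 by blast
qed

end
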